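(* A mixed graph $G=(V,D,B)$ is HTC-identifiable if and only if the following procedure terminates with $S=V$: initialize $S=\{v\in V:\mathrm{pa}(v)=\emptyset\}$; repeatedly, for $v=1,2,\dots,m$ in turn, if $v\notin S$, set $A=\big(S\cup(V\setminus\mathrm{htr}(v))\big)\setminus(\{v\}\cup\mathrm{sib}(v))$ and add $v$ to $S$ whenever the maximum flow in $G_{\mathrm{flow}}(v,A)$ has size $|\mathrm{pa}(v)|$; stop when $S=V$ or when a full pass over $v=1,\dots,m$ makes no change to $S$.
   Context: A mixed graph is $G=(V,D,B)$ with $V=[m]$, $D$ directed edges $v\to w$, $B$ symmetric bidirected edges $v\leftrightarrow w$, no self-loops. $\mathrm{pa}(v)=\{w:w\to v\in D\}$, $\mathrm{sib}(v)=\{w:w\leftrightarrow v\in B\}$. A half-trek from $y$ to $w$ is a path $y\leftrightarrow w_0\to w_1\to\cdots\to w_r=w$ (left side $\{y\}$, right side $\{w_0,\dots,w_r\}$) or $y\to w_1\to\cdots\to w_r=w$, $r\ge0$ (left side $\{y\}$, right side $\{y,w_1,\dots,w_r\}$); nodes may repeat. $\mathrm{htr}(v)$ is the set of $w\in V\setminus(\{v\}\cup\mathrm{sib}(v))$ reachable from $v$ by a half-trek. A system of half-treks from $X$ to $Y$: half-treks with distinct sources forming $X$ and distinct targets forming $Y$; no sided intersection: pairwise disjoint left sides and pairwise disjoint right sides. $Y$ satisfies the half-trek criterion w.r.t. $v$ if $|Y|=|\mathrm{pa}(v)|$, $Y\cap(\{v\}\cup\mathrm{sib}(v))=\emptyset$,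 and there is a system of half-treks with no sided intersection from $Y$ to $\mathrm{pa}(v)$. $G$ is HTC-identifiable if there exist $(Y_v:v\in V)$, each satisfying the half-trek criterion w.r.t. $v$, and a total order $\prec$ on $V$ with $w\prec v$ whenever $w\in Y_v\cap\mathrm{htr}(v)$. Flows: in a directed graph with source $s$, sink $t$, node capacities and edge capacities, a flow is a nonnegative edge function respecting edge capacities and, at each node $x\ne s,t$, conservation $\sum_u f(u,x)=\sum_w f(x,w)$ with this value at most the node capacity; its size is the total flow out of $s$. $G_{\mathrm{flow}}(v,A)$ has nodes $s,t$, $L(a)$ for $a\in A$, $R(w)$ for $w\in V$; edges $s\to L(a)$ and $L(a)\to R(a)$ ($a\in A$), $L(a)\to R(w)$ whenever $a\leftrightarrow w\in B$, $R(w)\to R(u)$ whenever $w\to u\in D$, and $R(w)\to t$ for $w\in\mathrm{pa}(v)$. All edges and $s,t$ have capacity $\infty$, all other nodes capacity $1$. *)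

theory Defs
  imports Complex_Main "HOL-Library.While_Combinator"
begin

text \<open>Mixed graph on V = {1..m}: directed edges D (pairs (v,w) meaning v -> w),
  bidirected edges B (symmetric relation).\<close>

definition pa :: "(nat \<times> nat) set \<Rightarrow> nat \<Rightarrow> nat set" where
  "pa D v = {w. (w, v) \<in> D}"

definition sib :: "(nat \<times> nat) set \<Rightarrow> nat \<Rightarrow> nat set" where
  "sib B v = {w. (w, v) \<in> B}"

text \<open>A half-trek with left node y and right-side node list rs (in order):
  either y <-> rs!0 -> rs!1 -> ... (bidirected start), or rs!0 = y and
  y -> rs!1 -> ... (directed; r = 0 allowed). Its target is last rs,
  its left side is {y}, its right side is set rs.\<close>
definition half_trek :: "(nat \<times> nat) set \<Rightarrow> (nat \<times> nat) set \<Rightarrow> nat \<Rightarrow> nat list \<Rightarrow> bool" where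
  "half_trek D B y rs \<longleftrightarrow> rs \<noteq> [] \<and> successively (\<lambda>a b. (a, b) \<in> D) rs
     \<and> (hd rs = y \<or> (y, hd rs) \<in> B)"

definition htr :: "nat \<Rightarrow> (nat \<times> nat) set \<Rightarrow> (nat \<times> nat) set \<Rightarrow> nat \<Rightarrow> nat set" where
  "htr m D B v = {w \<in> {1..m} - ({v} \<union> sib B v). \<exists>rs. half_trek D B v rs \<and> last rs = w}"

text \<open>System of half-treks from X to Y with no sided intersection: one half-trek per
  source y in X (sources distinct), targets distinct and forming Y, left sides {y}
  pairwise disjoint (automatic), right sides pairwise disjoint.\<close>
definition ht_system :: "(nat \<times> nat) set \<Rightarrow> (nat \<times> nat) set \<Rightarrow> nat set \<Rightarrow> nat set \<Rightarrow> bool" where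
  "ht_system D B X Y \<longleftrightarrow> (\<exists>\<pi> :: nat \<Rightarrow> nat list.
      (\<forall>y\<in>X. half_trek D B y (\<pi> y))
    \<and> bij_betw (\<lambda>y. last (\<pi> y)) X Y
    \<and> (\<forall>y\<in>X. \<forall>y'\<in>X. y \<noteq> y' \<longrightarrow> {y} \<inter> {y'} = {} \<and> set (\<pi> y) \<inter> set (\<pi> y') = {}))"

definition htc_criterion :: "nat \<Rightarrow> (nat \<times> nat) set \<Rightarrow> (nat \<times> nat) set \<Rightarrow> nat \<Rightarrow> nat set \<Rightarrow> bool" where
  "htc_criterion m D B v Y \<longleftrightarrow> Y \<subseteq> {1..m} \<and> card Y = card (pa D v)
     \<and> Y \<inter> ({v} \<union> sib B v) = {} \<and> ht_system D B Y (pa D v)"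

definition HTC_identifiable :: "nat \<Rightarrow> (nat \<times> nat) set \<Rightarrow> (nat \<times> nat) set \<Rightarrow> bool" where
  "HTC_identifiable m D B \<longleftrightarrow> (\<exists>(Ys :: nat \<Rightarrow> nat set) (R :: (nat \<times> nat) set).
      (\<forall>v\<in>{1..m}. htc_criterion m D B v (Ys v))
    \<and> strict_linear_order_on {1..m} R
    \<and> (\<forall>v\<in>{1..m}. \<forall>w \<in> Ys v \<inter> htr m D B v. (w, v) \<in> R))"

datatype fnode = Src | Snk | Lnode nat | Rnode nat

definition flow_nodes :: "nat \<Rightarrow> nat set \<Rightarrow> fnode set" where
  "flow_nodes m A = {Src, Snk} \<union> Lnode ` A \<union> Rnode ` {1..m}"

definition flow_edges :: "(nat \<times> nat) set \<Rightarrow> (nat \<times> nat) set \<Rightarrow> nat \<Rightarrow> nat set \<Rightarrow> (fnode \<times> fnode) set" where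
  "flow_edges D B v A =
     {(Src, Lnode a) | a. a \<in> A}
   \<union> {(Lnode a, Rnode a) | a. a \<in> A}
   \<union> {(Lnode a, Rnode w) | a w. a \<in> A \<and> (a, w) \<in> B}
   \<union> {(Rnode w, Rnode u) | w u. (w, u) \<in> D}
   \<union> {(Rnode w, Snk) | w. w \<in> pa D v}"

text \<open>Edge capacities and the capacities of s,t are infinite; all other nodes have
  capacity 1. Flow is nonnegative and supported on the edges.\<close>
definition is_flow :: "nat \<Rightarrow> (nat \<times> nat) set \<Rightarrow> (nat \<times> nat) set \<Rightarrow> nat \<Rightarrow> nat set
    \<Rightarrow> (fnode \<Rightarrow> fnode \<Rightarrow> real) \<Rightarrow> bool" where
  "is_flow m D B v A f \<longleftrightarrow>
     (\<forall>x y. 0 \<le> f x y)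
   \<and> (\<forall>x y. (x, y) \<notin> flow_edges D B v A \<longrightarrow> f x y = 0)
   \<and> (\<forall>x \<in> flow_nodes m A - {Src, Snk}.
        (\<Sum>u\<in>flow_nodes m A. f u x) = (\<Sum>w\<in>flow_nodes m A. f x w)
      \<and> (\<Sum>w\<in>flow_nodes m A. f x w) \<le> 1)"

definition flow_size :: "nat \<Rightarrow> nat set \<Rightarrow> (fnode \<Rightarrow> fnode \<Rightarrow> real) \<Rightarrow> real" where
  "flow_size m A f = (\<Sum>w\<in>flow_nodes m A. f Src w)"

definition max_flow :: "nat \<Rightarrow> (nat \<times> nat) set \<Rightarrow> (nat \<times> nat) set \<Rightarrow> nat \<Rightarrow> nat set \<Rightarrow> real" where
  "max_flow m D B v A = Sup (flow_size m A ` {f. is_flow m D B v A f})"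

definition htc_A :: "nat \<Rightarrow> (nat \<times> nat) set \<Rightarrow> (nat \<times> nat) set \<Rightarrow> nat set \<Rightarrow> nat \<Rightarrow> nat set" where
  "htc_A m D B S v = (S \<union> ({1..m} - htr m D B v)) - ({v} \<union> sib B v)"

definition htc_step :: "nat \<Rightarrow> (nat \<times> nat) set \<Rightarrow> (nat \<times> nat) set \<Rightarrow> nat \<Rightarrow> nat set \<Rightarrow> nat set" where
  "htc_step m D B v S =
     (if v \<notin> S \<and> max_flow m D B v (htc_A m D B S v) = real (card (pa D v))
      then insert v S else S)"

definition htc_pass :: "nat \<Rightarrow> (nat \<times> nat) set \<Rightarrow> (nat \<times> nat) set \<Rightarrow> nat set \<Rightarrow> nat set" where
  "htc_pass m D B S = fold (htc_step m D B) [1..<Suc m] S"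

definition htc_procedure :: "nat \<Rightarrow> (nat \<times> nat) set \<Rightarrow> (nat \<times> nat) set \<Rightarrow> nat set option" where
  "htc_procedure m D B =
     while_option (\<lambda>S. S \<noteq> {1..m} \<and> htc_pass m D B S \<noteq> S) (htc_pass m D B)
       {v \<in> {1..m}. pa D v = {}}"

end

theory Submission
  imports Defs
begin


definition walk :: "('a \<times> 'a) set \<Rightarrow> 'a list \<Rightarrow> bool" where
  "walk E p \<longleftrightarrow> p \<noteq> [] \<and> successively (\<lambda>a b. (a, b) \<in> E) p"

definition abwalk :: "('a \<times> 'a) set \<Rightarrow> 'a set \<Rightarrow> 'a set \<Rightarrow> 'a list \<Rightarrow> bool" where
  "abwalk E A B p \<longleftrightarrow> walk E p \<and> hd p \<in> A \<and> last p \<in> B"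

definition sepr :: "('a \<times> 'a) set \<Rightarrow> 'a set \<Rightarrow> 'a set \<Rightarrow> 'a set \<Rightarrow> bool" where
  "sepr E A B X \<longleftrightarrow> (\<forall>p. abwalk E A B p \<longrightarrow> set p \<inter> X \<noteq> {})"

definition disj_walks :: "('a \<times> 'a) set \<Rightarrow> 'a set \<Rightarrow> 'a set \<Rightarrow> 'a list set \<Rightarrow> bool" where
  "disj_walks E A B W \<longleftrightarrow> (\<forall>p\<in>W. abwalk E A B p) \<and>
     (\<forall>p\<in>W. \<forall>q\<in>W. p \<noteq> q \<longrightarrow> set p \<inter> set q = {})"

lemma walk_mono: "walk E p \<Longrightarrow> E \<subseteq> E' \<Longrightarrow> walk E' p"
  unfolding walk_def by (auto elim!: successively_mono)

lemma disj_walks_mono: "disj_walks E A B W \<Longrightarrow> E \<subseteq> E' \<Longrightarrow> disj_walks E' A B W"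
  unfolding disj_walks_def abwalk_def using walk_mono by metis

lemma walk_insert:
  "walk (insert (x, y) F) p \<Longrightarrow> walk F p \<or> (x \<in> set (butlast p) \<and> y \<in> set (tl p))"
proof (induction p rule: induct_list012)
  case 1 then show ?case by (simp add: walk_def)
next
  case (2 a) then show ?case by (simp add: walk_def)
next
  case (3 a b p)
  have w: "walk (insert (x, y) F) (b # p)" and e: "(a, b) \<in> insert (x, y) F"
    using "3.prems" by (auto simp: walk_def)
  show ?case
  proof (cases "(a, b) \<in> F")
    case True
    from "3.IH"(2)[OF w] show ?thesis
    proof
      assume "walk F (b # p)" then show ?thesis using True by (simp add: walk_def)
    next
      assume "x \<in> set (butlast (b # p)) \<and> y \<in> set (tl (b # p))"
      then show ?thesis by (cases p) auto
    qed
  next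
    case False
    then have "a = x" "b = y" using e by auto
    then show ?thesis by simp
  qed
qed

lemma walk_glue:
  assumes "walk E (p1 @ v # p2)" "walk E (q1 @ v # q2)"
  shows "walk E (p1 @ v # q2)"
  using assms unfolding walk_def
  by (auto simp: successively_append_iff successively_Cons split: list.splits)

fun pre_to :: "'a set \<Rightarrow> 'a list \<Rightarrow> 'a list" where
  "pre_to X [] = []"
| "pre_to X (a # p) = (if a \<in> X then [a] else a # pre_to X p)"

lemma pre_to_prefix: "\<exists>r. p = pre_to X p @ r"
  by (induction p) auto

lemma pre_to_props:
  assumes "set p \<inter> X \<noteq> {}"
  shows "pre_to X p \<noteq> [] \<and> last (pre_to X p) \<in> X \<and> set (butlast (pre_to X p)) \<inter> X = {}
     \<and> hd (pre_to X p) = hd p \<and> set (pre_to X p) \<subseteq> set p"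
  using assms
proof (induction p)
  case Nil then show ?case by simp
next
  case (Cons a p)
  show ?case
  proof (cases "a \<in> X")
    case True then show ?thesis by simp
  next
    case False
    then have "set p \<inter> X \<noteq> {}" using Cons.prems by auto
    from Cons.IH[OF this] False show ?thesis by auto
  qed
qed

lemma walk_prefix: "walk E (p @ r) \<Longrightarrow> p \<noteq> [] \<Longrightarrow> walk E p"
  unfolding walk_def by (simp add: successively_append_iff)

lemma walk_suffix: "walk E (l @ p) \<Longrightarrow> p \<noteq> [] \<Longrightarrow> walk E p"
  unfolding walk_def by (simp add: successively_append_iff)

lemma walk_pre_to: "walk E p \<Longrightarrow> set p \<inter> X \<noteq> {} \<Longrightarrow> walk E (pre_to X p)"
  using pre_to_prefix[of p X] pre_to_props[of p X] walk_prefix by metis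

fun post_from :: "'a set \<Rightarrow> 'a list \<Rightarrow> 'a list" where
  "post_from X [] = []"
| "post_from X (a # p) = (if set p \<inter> X \<noteq> {} then post_from X p else if a \<in> X then a # p else [])"

lemma post_from_suffix: "\<exists>l. p = l @ post_from X p"
proof (induction p)
  case Nil then show ?case by simp
next
  case (Cons a p)
  then obtain l where "p = l @ post_from X p" by blast
  then show ?case by (auto intro: exI[of _ "a # l"] exI[of _ "[a]"] exI[of _ "[]"])
qed

lemma post_from_props:
  assumes "set p \<inter> X \<noteq> {}"
  shows "post_from X p \<noteq> [] \<and> hd (post_from X p) \<in> X \<and> set (tl (post_from X p)) \<inter> X = {}
     \<and> last (post_from X p) = last p \<and> set (post_from X p) \<subseteq> set p"
  using assms
proof (induction p)
  case Nil then show ?case by simp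
next
  case (Cons a p)
  show ?case
  proof (cases "set p \<inter> X \<noteq> {}")
    case True
    from Cons.IH[OF this] True show ?thesis by auto
  next
    case False
    then have "a \<in> X" using Cons.prems by auto
    with False show ?thesis by auto
  qed
qed

lemma walk_post_from: "walk E p \<Longrightarrow> set p \<inter> X \<noteq> {} \<Longrightarrow> walk E (post_from X p)"
  using post_from_suffix[of p X] post_from_props[of p X] walk_suffix by metis

lemma disj_inj:
  assumes "\<forall>p\<in>W. \<forall>q\<in>W. p \<noteq> q \<longrightarrow> set p \<inter> set q = {}" "\<forall>p\<in>W. g p \<in> set p"
  shows "inj_on g W"
  unfolding inj_on_def using assms by (metis disjoint_iff)

lemma bij_of_card:
  assumes "inj_on g W" "g ` W \<subseteq> X" "finite X" "card W = card X"
  shows "bij_betw g W X"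
proof -
  have "card (g ` W) = card X" using assms card_image by metis
  then have "g ` W = X" using assms card_subset_eq by metis
  then show ?thesis using assms(1) by (simp add: bij_betw_def)
qed

lemma walk_empty: "walk {} p \<longleftrightarrow> (\<exists>a. p = [a])"
proof
  assume "walk {} p"
  then show "\<exists>a. p = [a]" unfolding walk_def
    by (cases p; cases "tl p") auto
qed (auto simp: walk_def)

lemma last_or_butlast: "v \<in> set p \<Longrightarrow> v = last p \<or> v \<in> set (butlast p)"
  by (induction p) auto

lemma tl_subD: "x \<in> set (tl xs) \<Longrightarrow> x \<in> set xs"
  by (cases xs) auto

lemma hd_or_tl: "v \<in> set p \<Longrightarrow> v = hd p \<or> v \<in> set (tl p)"
  by (cases p) auto

theorem menger_walks:
  assumes "finite E"
  shows "\<forall>A B k. finite A \<longrightarrow> (\<forall>X. finite X \<longrightarrow> sepr E A B X \<longrightarrow> k \<le> card X)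
     \<longrightarrow> (\<exists>W. card W = k \<and> finite W \<and> disj_walks E A B W)"
  using assms
proof (induction E rule: finite_induct)
  case empty
  show ?case
  proof (intro allI impI)
    fix A B :: "'a set" and k
    assume fA: "finite A" and ck: "\<forall>X. finite X \<longrightarrow> sepr {} A B X \<longrightarrow> k \<le> card X"
    have "sepr {} A B (A \<inter> B)"
      unfolding sepr_def abwalk_def walk_empty by auto
    then have "k \<le> card (A \<inter> B)" using ck fA by auto
    then obtain S where S: "S \<subseteq> A \<inter> B" "card S = k"
      using obtain_subset_with_card_n by metis
    have fS: "finite S" using S fA finite_subset by blast
    define W where "W = (\<lambda>a. [a]) ` S"
    have "card W = k" unfolding W_def using S by (simp add: card_image inj_on_def)
    moreover have "finite W" unfolding W_def using fS by simp
    moreover have "disj_walks {} A B W"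
      unfolding disj_walks_def abwalk_def walk_empty W_def using S by auto
    ultimately show "\<exists>W. card W = k \<and> finite W \<and> disj_walks {} A B W" by blast
  qed
next
  case (insert e F)
  obtain x y where e: "e = (x, y)" by fastforce
  show ?case
  proof (intro allI impI)
    fix A B :: "'a set" and k
    assume fA: "finite A"
      and ck: "\<forall>X. finite X \<longrightarrow> sepr (insert e F) A B X \<longrightarrow> k \<le> card X"
    show "\<exists>W. card W = k \<and> finite W \<and> disj_walks (insert e F) A B W"
    proof (cases "\<forall>X. finite X \<longrightarrow> sepr F A B X \<longrightarrow> k \<le> card X")
      case True
      then obtain W where "card W = k" "finite W" "disj_walks F A B W"
        using insert.IH fA by blast
      then show ?thesis using disj_walks_mono[of F A B W "insert e F"] by blast
    next
      case False
      then obtain Y where fY: "finite Y" and sY: "sepr F A B Y" and cY: "card Y < k"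
        by force
      define Xx where "Xx = insert x Y"
      define Xy where "Xy = insert y Y"
      have fXx: "finite Xx" and fXy: "finite Xy" using fY by (auto simp: Xx_def Xy_def)
      have sXx: "sepr (insert e F) A B Xx"
        unfolding sepr_def
      proof (intro allI impI)
        fix p assume ab: "abwalk (insert e F) A B p"
        from walk_insert[of x y F p] ab e have "walk F p \<or> x \<in> set (butlast p)"
          by (auto simp: abwalk_def)
        then show "set p \<inter> Xx \<noteq> {}"
        proof
          assume "walk F p"
          then have "set p \<inter> Y \<noteq> {}" using sY ab by (auto simp: sepr_def abwalk_def)
          then show ?thesis by (auto simp: Xx_def)
        next
          assume "x \<in> set (butlast p)"
          then show ?thesis by (auto simp: Xx_def dest: in_set_butlastD)
        qed
      qed
      have sXy: "sepr (insert e F) A B Xy"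
        unfolding sepr_def
      proof (intro allI impI)
        fix p assume ab: "abwalk (insert e F) A B p"
        from walk_insert[of x y F p] ab e have "walk F p \<or> y \<in> set (tl p)"
          by (auto simp: abwalk_def)
        then show "set p \<inter> Xy \<noteq> {}"
        proof
          assume "walk F p"
          then have "set p \<inter> Y \<noteq> {}" using sY ab by (auto simp: sepr_def abwalk_def)
          then show ?thesis by (auto simp: Xy_def)
        next
          assume "y \<in> set (tl p)"
          then show ?thesis by (cases p) (auto simp: Xy_def)
        qed
      qed
      have "card Xx \<le> Suc (card Y)" unfolding Xx_def using fY by (simp add: card_insert_if)
      moreover have "k \<le> card Xx" using ck sXx fXx by blast
      ultimately have cXx: "card Xx = k" using cY by linarith
      have "card Xy \<le> Suc (card Y)" unfolding Xy_def using fY by (simp add: card_insert_if)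
      moreover have "k \<le> card Xy" using ck sXy fXy by blast
      ultimately have cXy: "card Xy = k" using cY by linarith
      have xY: "x \<notin> Y" using cXx cY by (auto simp: Xx_def insert_absorb)
      have yY: "y \<notin> Y" using cXy cY by (auto simp: Xy_def insert_absorb)
      have "\<forall>X. finite X \<longrightarrow> sepr F A Xx X \<longrightarrow> k \<le> card X"
      proof (intro allI impI)
        fix X assume fX: "finite X" and sX: "sepr F A Xx X"
        have "sepr (insert e F) A B X"
          unfolding sepr_def
        proof (intro allI impI)
          fix p assume ab: "abwalk (insert e F) A B p"
          then have hit: "set p \<inter> Xx \<noteq> {}" using sXx by (auto simp: sepr_def)
          define q where "q = pre_to Xx p"
          have qp: "q \<noteq> [] \<and> last q \<in> Xx \<and> set (butlast q) \<inter> Xx = {} \<and> hd q = hd p \<and> set q \<subseteq> set p"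
            using pre_to_props[OF hit] unfolding q_def .
          have wq: "walk (insert e F) q" using walk_pre_to ab hit unfolding q_def abwalk_def by blast
          have "x \<notin> set (butlast q)" using qp by (auto simp: Xx_def)
          then have "walk F q" using walk_insert[of x y F q] wq e by auto
          then have "abwalk F A Xx q" using qp ab by (auto simp: abwalk_def)
          then have "set q \<inter> X \<noteq> {}" using sX by (auto simp: sepr_def)
          then show "set p \<inter> X \<noteq> {}" using qp by auto
        qed
        then show "k \<le> card X" using ck fX by blast
      qed
      then obtain W1 where W1: "card W1 = k" "finite W1" "disj_walks F A Xx W1"
        using insert.IH fA by blast
      have "\<forall>X. finite X \<longrightarrow> sepr F Xy B X \<longrightarrow> k \<le> card X"
      proof (intro allI impI)
        fix X assume fX: "finite X" and sX: "sepr F Xy B X"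
        have "sepr (insert e F) A B X"
          unfolding sepr_def
        proof (intro allI impI)
          fix p assume ab: "abwalk (insert e F) A B p"
          then have hit: "set p \<inter> Xy \<noteq> {}" using sXy by (auto simp: sepr_def)
          define q where "q = post_from Xy p"
          have qp: "q \<noteq> [] \<and> hd q \<in> Xy \<and> set (tl q) \<inter> Xy = {} \<and> last q = last p \<and> set q \<subseteq> set p"
            using post_from_props[OF hit] unfolding q_def .
          have wq: "walk (insert e F) q" using walk_post_from ab hit unfolding q_def abwalk_def by blast
          have "y \<notin> set (tl q)" using qp by (auto simp: Xy_def)
          then have "walk F q" using walk_insert[of x y F q] wq e by auto
          then have "abwalk F Xy B q" using qp ab by (auto simp: abwalk_def)
          then have "set q \<inter> X \<noteq> {}" using sX by (auto simp: sepr_def)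
          then show "set p \<inter> X \<noteq> {}" using qp by auto
        qed
        then show "k \<le> card X" using ck fX by blast
      qed
      then obtain W2 where W2: "card W2 = k" "finite W2" "disj_walks F Xy B W2"
        using insert.IH fXy by blast
      define W1' where "W1' = pre_to Xx ` W1"
      define W2' where "W2' = post_from Xy ` W2"
      have hit1: "\<forall>p\<in>W1. set p \<inter> Xx \<noteq> {}"
        using W1(3) unfolding disj_walks_def abwalk_def walk_def by (metis disjoint_iff last_in_set)
      have hit2: "\<forall>p\<in>W2. set p \<inter> Xy \<noteq> {}"
        using W2(3) unfolding disj_walks_def abwalk_def walk_def by (metis disjoint_iff hd_in_set)
      have P1: "\<forall>q\<in>W1'. walk F q \<and> hd q \<in> A \<and> last q \<in> Xx \<and> set (butlast q) \<inter> Xx = {}"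
      proof
        fix q assume "q \<in> W1'"
        then obtain p where p: "p \<in> W1" "q = pre_to Xx p" unfolding W1'_def by blast
        have h: "set p \<inter> Xx \<noteq> {}" using hit1 p by blast
        have "abwalk F A Xx p" using W1(3) p by (auto simp: disj_walks_def)
        then show "walk F q \<and> hd q \<in> A \<and> last q \<in> Xx \<and> set (butlast q) \<inter> Xx = {}"
          using pre_to_props[OF h] walk_pre_to[OF _ h] p by (auto simp: abwalk_def)
      qed
      have P2: "\<forall>q\<in>W2'. walk F q \<and> hd q \<in> Xy \<and> last q \<in> B \<and> set (tl q) \<inter> Xy = {}"
      proof
        fix q assume "q \<in> W2'"
        then obtain p where p: "p \<in> W2" "q = post_from Xy p" unfolding W2'_def by blast
        have h: "set p \<inter> Xy \<noteq> {}" using hit2 p by blast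
        have "abwalk F Xy B p" using W2(3) p by (auto simp: disj_walks_def)
        then show "walk F q \<and> hd q \<in> Xy \<and> last q \<in> B \<and> set (tl q) \<inter> Xy = {}"
          using post_from_props[OF h] walk_post_from[OF _ h] p by (auto simp: abwalk_def)
      qed
      have D1: "\<forall>p\<in>W1'. \<forall>q\<in>W1'. p \<noteq> q \<longrightarrow> set p \<inter> set q = {}"
      proof (intro ballI impI)
        fix p q assume pq: "p \<in> W1'" "q \<in> W1'" "p \<noteq> q"
        obtain p0 where p0: "p0 \<in> W1" "p = pre_to Xx p0" using pq(1) unfolding W1'_def by (rule imageE)
        obtain q0 where q0: "q0 \<in> W1" "q = pre_to Xx q0" using pq(2) unfolding W1'_def by (rule imageE)
        have ne: "p0 \<noteq> q0" using pq(3) p0 q0 by metis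
        have "set p \<subseteq> set p0" using pre_to_props[of p0 Xx] hit1 p0 by metis
        moreover have "set q \<subseteq> set q0" using pre_to_props[of q0 Xx] hit1 q0 by metis
        moreover have "set p0 \<inter> set q0 = {}" using W1(3) p0(1) q0(1) ne unfolding disj_walks_def by metis
        ultimately show "set p \<inter> set q = {}" by blast
      qed
      have D2: "\<forall>p\<in>W2'. \<forall>q\<in>W2'. p \<noteq> q \<longrightarrow> set p \<inter> set q = {}"
      proof (intro ballI impI)
        fix p q assume pq: "p \<in> W2'" "q \<in> W2'" "p \<noteq> q"
        obtain p0 where p0: "p0 \<in> W2" "p = post_from Xy p0" using pq(1) unfolding W2'_def by (rule imageE)
        obtain q0 where q0: "q0 \<in> W2" "q = post_from Xy q0" using pq(2) unfolding W2'_def by (rule imageE)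
        have ne: "p0 \<noteq> q0" using pq(3) p0 q0 by metis
        have "set p \<subseteq> set p0" using post_from_props[of p0 Xy] hit2 p0 by metis
        moreover have "set q \<subseteq> set q0" using post_from_props[of q0 Xy] hit2 q0 by metis
        moreover have "set p0 \<inter> set q0 = {}" using W2(3) p0(1) q0(1) ne unfolding disj_walks_def by metis
        ultimately show "set p \<inter> set q = {}" by blast
      qed
      have "inj_on (\<lambda>p. hd (pre_to Xx p)) W1"
      proof (rule disj_inj)
        show "\<forall>p\<in>W1. \<forall>q\<in>W1. p \<noteq> q \<longrightarrow> set p \<inter> set q = {}" using W1(3) by (simp add: disj_walks_def)
        show "\<forall>p\<in>W1. hd (pre_to Xx p) \<in> set p"
          using pre_to_props hit1 by (metis hd_in_set subsetD)
      qed
      then have "inj_on (pre_to Xx) W1" unfolding inj_on_def by metis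
      then have cW1': "card W1' = k" unfolding W1'_def using W1(1) card_image by metis
      have "inj_on (\<lambda>p. hd (post_from Xy p)) W2"
      proof (rule disj_inj)
        show "\<forall>p\<in>W2. \<forall>q\<in>W2. p \<noteq> q \<longrightarrow> set p \<inter> set q = {}" using W2(3) by (simp add: disj_walks_def)
        show "\<forall>p\<in>W2. hd (post_from Xy p) \<in> set p"
          using post_from_props hit2 by (metis hd_in_set subsetD)
      qed
      then have "inj_on (post_from Xy) W2" unfolding inj_on_def by metis
      then have cW2': "card W2' = k" unfolding W2'_def using W2(1) card_image by metis
      have ne1: "\<forall>q\<in>W1'. q \<noteq> []" using P1 by (auto simp: walk_def)
      have ne2: "\<forall>q\<in>W2'. q \<noteq> []" using P2 by (auto simp: walk_def)
      have bij1: "bij_betw last W1' Xx"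
        by (rule bij_of_card[OF disj_inj[OF D1]]) (use ne1 P1 fXx cW1' cXx in auto)
      have bij2: "bij_betw hd W2' Xy"
        by (rule bij_of_card[OF disj_inj[OF D2]]) (use ne2 P2 fXy cW2' cXy in auto)
      define P where "P = inv_into W1' last"
      define Q where "Q = inv_into W2' hd"
      have Pz: "\<And>z. z \<in> Xx \<Longrightarrow> P z \<in> W1' \<and> last (P z) = z"
        unfolding P_def using bij1 by (metis bij_betw_def f_inv_into_f inv_into_into)
      have Qz: "\<And>z. z \<in> Xy \<Longrightarrow> Q z \<in> W2' \<and> hd (Q z) = z"
        unfolding Q_def using bij2 by (metis bij_betw_def f_inv_into_f inv_into_into)
      have key: "\<And>p q v. p \<in> W1' \<Longrightarrow> q \<in> W2' \<Longrightarrow> v \<in> set p \<Longrightarrow> v \<in> set q \<Longrightarrow>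
                   v \<in> Y \<and> v = last p \<and> v = hd q"
      proof -
        fix p q v assume p: "p \<in> W1'" and q: "q \<in> W2'" and vp: "v \<in> set p" and vq: "v \<in> set q"
        obtain p1 p2 where pd: "p = p1 @ v # p2" using vp split_list by metis
        obtain q1 q2 where qd: "q = q1 @ v # q2" using vq split_list by metis
        have wr: "walk F (p1 @ v # q2)" using walk_glue P1 P2 p q pd qd by metis
        have "hd (p1 @ v # q2) = hd p" using pd by (cases p1) auto
        moreover have "last (p1 @ v # q2) = last q" using qd by (cases q2) auto
        ultimately have "abwalk F A B (p1 @ v # q2)" using wr P1 P2 p q by (auto simp: abwalk_def)
        then have "set (p1 @ v # q2) \<inter> Y \<noteq> {}" using sY unfolding sepr_def by blast
        moreover have "set p1 \<subseteq> set (butlast p)" using pd by (simp add: butlast_append)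
        moreover have "set q2 \<subseteq> set (tl q)" using qd by (cases q1) auto
        moreover have "set (butlast p) \<inter> Y = {}" using P1 p by (auto simp: Xx_def)
        moreover have "set (tl q) \<inter> Y = {}" using P2 q by (auto simp: Xy_def)
        ultimately have vY: "v \<in> Y" by auto
        have "v \<notin> set (butlast p)" using P1 p vY by (auto simp: Xx_def)
        then have "v = last p" using last_or_butlast vp by metis
        moreover have "v \<notin> set (tl q)" using P2 q vY by (auto simp: Xy_def)
        then have "v = hd q" using hd_or_tl vq by metis
        ultimately show "v \<in> Y \<and> v = last p \<and> v = hd q" using vY by blast
      qed
      define h where "h z = (if z = x then y else z)" for z
      define g where "g z = (if z = x then P x @ Q y else P z @ tl (Q z))" for z
      have hz: "\<And>z. z \<in> Xx \<Longrightarrow> h z \<in> Xy" by (auto simp: h_def Xx_def Xy_def)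
      have hinj: "\<And>z z'. z \<in> Xx \<Longrightarrow> z' \<in> Xx \<Longrightarrow> h z = h z' \<Longrightarrow> z = z'"
        using xY yY by (auto simp: h_def Xx_def split: if_splits)
      have gset: "\<And>z. z \<in> Xx \<Longrightarrow> set (g z) \<subseteq> set (P z) \<union> set (Q (h z))"
        by (auto simp: g_def h_def dest: tl_subD)
      have gwalk: "\<And>z. z \<in> Xx \<Longrightarrow> abwalk (insert e F) A B (g z)"
      proof -
        fix z assume z: "z \<in> Xx"
        have Pw: "walk F (P z)" "hd (P z) \<in> A" "last (P z) = z" "P z \<noteq> []"
          using Pz[OF z] P1 ne1 by auto
        have Qw: "walk F (Q (h z))" "hd (Q (h z)) = h z" "last (Q (h z)) \<in> B" "Q (h z) \<noteq> []"
          using Qz[OF hz[OF z]] P2 ne2 by auto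
        show "abwalk (insert e F) A B (g z)"
        proof (cases "z = x")
          case True
          have "walk (insert e F) (P x @ Q y)"
            using Pw Qw True walk_mono[of F _ "insert e F"] e
            unfolding walk_def h_def by (auto simp: successively_append_iff)
          then show ?thesis using Pw Qw True by (auto simp: abwalk_def g_def h_def)
        next
          case False
          then have hzz: "h z = z" by (simp add: h_def)
          have pz: "P z = butlast (P z) @ [z]" using Pw append_butlast_last_id by metis
          have qz: "Q z = z # tl (Q z)" using Qw hzz list.collapse by metis
          have w1: "walk F (butlast (P z) @ [z])" using Pw(1) pz by metis
          have w2: "walk F ([] @ z # tl (Q z))" using Qw(1) hzz qz by (metis append_Nil)
          have "walk F (butlast (P z) @ z # tl (Q z))" using walk_glue[OF w1 w2] .
          moreover have "P z @ tl (Q z) = butlast (P z) @ z # tl (Q z)"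
            using pz by (metis append_Cons append_Nil append_assoc)
          ultimately have wF: "walk F (P z @ tl (Q z))" by metis
          have "walk (insert e F) (P z @ tl (Q z))"
            using walk_mono[OF wF subset_insertI] .
          moreover have "last (P z @ tl (Q z)) = last (Q z)"
          proof (cases "tl (Q z) = []")
            case True
            then show ?thesis using Pw qz by (metis append_Nil2 last_ConsL)
          next
            case False
            then show ?thesis using qz by (metis last_ConsR last_appendR)
          qed
          ultimately show ?thesis using Pw Qw False hzz by (auto simp: abwalk_def g_def)
        qed
      qed
      have gdisj: "\<And>z z'. z \<in> Xx \<Longrightarrow> z' \<in> Xx \<Longrightarrow> z \<noteq> z' \<Longrightarrow> set (g z) \<inter> set (g z') = {}"
      proof -
        fix z z' assume z: "z \<in> Xx" and z': "z' \<in> Xx" and ne: "z \<noteq> z'"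
        have a: "set (P z) \<inter> set (P z') = {}"
          using D1 Pz z z' ne by metis
        have b: "set (Q (h z)) \<inter> set (Q (h z')) = {}"
          using D2 Qz hz z z' ne hinj by metis
        have c: "set (P z) \<inter> set (Q (h z')) = {}"
        proof (rule ccontr)
          assume "set (P z) \<inter> set (Q (h z')) \<noteq> {}"
          then obtain v where "v \<in> set (P z)" "v \<in> set (Q (h z'))" by blast
          from key[OF _ _ this] Pz[OF z] Qz[OF hz[OF z']]
          have "v \<in> Y" "v = z" "v = h z'" by auto
          then show False using ne yY by (auto simp: h_def split: if_splits)
        qed
        have d: "set (P z') \<inter> set (Q (h z)) = {}"
        proof (rule ccontr)
          assume "set (P z') \<inter> set (Q (h z)) \<noteq> {}"
          then obtain v where "v \<in> set (P z')" "v \<in> set (Q (h z))" by blast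
          from key[OF _ _ this] Pz[OF z'] Qz[OF hz[OF z]]
          have "v \<in> Y" "v = z'" "v = h z" by auto
          then show False using ne yY by (auto simp: h_def split: if_splits)
        qed
        show "set (g z) \<inter> set (g z') = {}" using gset[OF z] gset[OF z'] a b c d by blast
      qed
      have gne: "\<And>z. z \<in> Xx \<Longrightarrow> g z \<noteq> []" using gwalk by (auto simp: abwalk_def walk_def)
      have ginj: "inj_on g Xx"
      proof (rule inj_onI, rule ccontr)
        fix z z' assume "z \<in> Xx" "z' \<in> Xx" "g z = g z'" "z \<noteq> z'"
        then show False using gdisj gne by (metis inf.idem set_empty)
      qed
      define W where "W = g ` Xx"
      have "card W = k" unfolding W_def using card_image[OF ginj] cXx by simp
      moreover have "finite W" unfolding W_def using fXx by simp
      moreover have "disj_walks (insert e F) A B W"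
        unfolding disj_walks_def W_def using gwalk gdisj by auto
      ultimately show ?thesis by blast
    qed
  qed
qed




definition H :: "(nat \<times> nat) set \<Rightarrow> (nat \<times> nat) set \<Rightarrow> nat set \<Rightarrow> (fnode \<times> fnode) set" where
  "H D B A = {(Lnode a, Rnode a) | a. a \<in> A} \<union> {(Lnode a, Rnode w) | a w. a \<in> A \<and> (a, w) \<in> B}
     \<union> {(Rnode w, Rnode u) | w u. (w, u) \<in> D}"

lemma walk_elems: "walk E p \<Longrightarrow> x \<in> set p \<Longrightarrow> x = hd p \<or> x \<in> snd ` E"
proof (induction p rule: induct_list012)
  case (3 a b p)
  have "walk E (b # p)" "(a, b) \<in> E" using "3.prems" by (auto simp: walk_def)
  then show ?case using "3.IH"(2) "3.prems"(2) by force
qed (auto simp: walk_def)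

lemma finite_flow_nodes: "finite A \<Longrightarrow> finite (flow_nodes m A)"
  by (simp add: flow_nodes_def)

lemma flow_edge_H: "(z, u) \<in> flow_edges D B v A \<Longrightarrow> z \<noteq> Src \<Longrightarrow> u \<noteq> Snk \<Longrightarrow> (z, u) \<in> H D B A"
  by (auto simp: flow_edges_def H_def)

lemma flow_cut:
  assumes VA: "A \<subseteq> {1..m}"
    and f: "is_flow m D B v A f"
    and X: "X \<subseteq> flow_nodes m A - {Src, Snk}" "sepr (H D B A) (Lnode ` A) (Rnode ` pa D v) X"
  shows "flow_size m A f \<le> card X"
proof -
  define N where "N = flow_nodes m A"
  have fA: "finite A" using VA finite_subset by blast
  have fN: "finite N" unfolding N_def using fA by (rule finite_flow_nodes)
  have fX: "finite X" using X(1) fN finite_subset unfolding N_def by blast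
  have nonneg: "\<And>x y. 0 \<le> f x y" using f by (simp add: is_flow_def)
  have zero: "\<And>x y. (x, y) \<notin> flow_edges D B v A \<Longrightarrow> f x y = 0" using f by (simp add: is_flow_def)
  have cons: "\<And>x. x \<in> N - {Src, Snk} \<Longrightarrow> (\<Sum>u\<in>N. f u x) = (\<Sum>w\<in>N. f x w) \<and> (\<Sum>w\<in>N. f x w) \<le> 1"
    using f unfolding is_flow_def N_def by blast
  define Z where "Z = {z \<in> N. z = Src \<or> (\<exists>p. walk (H D B A) p \<and> hd p \<in> Lnode ` A \<and> last p = z \<and> set p \<inter> X = {})}"
  have SrcZ: "Src \<in> Z" unfolding Z_def N_def flow_nodes_def by simp
  have ZN: "Z \<subseteq> N" unfolding Z_def by blast
  have fZ: "finite Z" using ZN fN finite_subset by blast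
  have inSrc: "\<And>u. f u Src = 0" by (rule zero) (simp add: flow_edges_def)
  have SnkZ: "Snk \<notin> Z"
  proof
    assume "Snk \<in> Z"
    then obtain p where p: "walk (H D B A) p" "hd p \<in> Lnode ` A" "last p = Snk"
      unfolding Z_def by auto
    have "Snk \<in> set p" using p by (metis last_in_set walk_def)
    from walk_elems[OF p(1) this] p(2) show False by (auto simp: H_def)
  qed
  have cut: "\<And>z u. z \<in> Z \<Longrightarrow> u \<in> N \<Longrightarrow> u \<notin> Z \<Longrightarrow> u \<notin> X \<Longrightarrow> f z u = 0"
  proof (rule ccontr)
    fix z u assume z: "z \<in> Z" and u: "u \<in> N" "u \<notin> Z" "u \<notin> X" and nz: "f z u \<noteq> 0"
    have e: "(z, u) \<in> flow_edges D B v A" using nz zero by blast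
    show False
    proof (cases "z = Src")
      case True
      then obtain a where a: "a \<in> A" "u = Lnode a" using e by (auto simp: flow_edges_def)
      have "walk (H D B A) [u]" by (simp add: walk_def)
      then have "u \<in> Z" using a u unfolding Z_def by auto
      then show False using u by blast
    next
      case False
      then obtain p where p: "walk (H D B A) p" "hd p \<in> Lnode ` A" "last p = z" "set p \<inter> X = {}"
        using z unfolding Z_def by auto
      show False
      proof (cases "u = Snk")
        case True
        then obtain w where w: "w \<in> pa D v" "z = Rnode w" using e by (auto simp: flow_edges_def)
        then have "abwalk (H D B A) (Lnode ` A) (Rnode ` pa D v) p"
          using p by (auto simp: abwalk_def)
        then show False using X(2) p(4) by (auto simp: sepr_def)
      next
        case uS: False
        have eH: "(z, u) \<in> H D B A" using flow_edge_H[OF e False uS] .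
        have "walk (H D B A) (p @ [u])"
          using p(1) p(3) eH by (auto simp: walk_def successively_append_iff)
        moreover have "hd (p @ [u]) \<in> Lnode ` A" using p by (auto simp: walk_def)
        moreover have "last (p @ [u]) = u" by simp
        moreover have "set (p @ [u]) \<inter> X = {}" using p(4) u(3) by auto
        ultimately have "u \<in> Z" using u(1) unfolding Z_def by blast
        then show False using u by blast
      qed
    qed
  qed
  define out where "out z = (\<Sum>w\<in>N. f z w)" for z
  define inn where "inn z = (\<Sum>w\<in>N. f w z)" for z
  have "(\<Sum>z\<in>Z. out z - inn z) = out Src - inn Src + (\<Sum>z\<in>Z - {Src}. out z - inn z)"
    using sum.remove[OF fZ SrcZ] by blast
  moreover have "(\<Sum>z\<in>Z - {Src}. out z - inn z) = 0"
  proof (rule sum.neutral, rule ballI)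
    fix z assume "z \<in> Z - {Src}"
    then have "z \<in> N - {Src, Snk}" using ZN SnkZ by blast
    then show "out z - inn z = 0" using cons unfolding out_def inn_def by simp
  qed
  moreover have "inn Src = 0" unfolding inn_def using inSrc by simp
  ultimately have e1: "out Src = (\<Sum>z\<in>Z. out z) - (\<Sum>z\<in>Z. inn z)"
    by (simp add: sum_subtractf)
  define S1 where "S1 = (\<Sum>z\<in>Z. \<Sum>u\<in>Z. f z u)"
  define S2 where "S2 = (\<Sum>z\<in>Z. \<Sum>u\<in>N - Z. f z u)"
  have "(\<Sum>z\<in>Z. out z) = S1 + S2"
  proof -
    have "\<And>z. out z = (\<Sum>u\<in>N - Z. f z u) + (\<Sum>u\<in>Z. f z u)"
      unfolding out_def using sum.subset_diff[OF ZN fN] by blast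
    then show ?thesis unfolding S1_def S2_def by (simp add: sum.distrib)
  qed
  moreover have "S1 \<le> (\<Sum>z\<in>Z. inn z)"
  proof -
    have "S1 = (\<Sum>z\<in>Z. \<Sum>u\<in>Z. f u z)" unfolding S1_def by (rule sum.swap)
    also have "\<dots> \<le> (\<Sum>z\<in>Z. inn z)"
      unfolding inn_def by (rule sum_mono, rule sum_mono2[OF fN ZN]) (simp add: nonneg)
    finally show ?thesis .
  qed
  ultimately have e2: "out Src \<le> S2" using e1 by linarith
  have "S2 \<le> (\<Sum>z\<in>Z. \<Sum>u\<in>X. f z u)"
    unfolding S2_def
  proof (rule sum_mono)
    fix z assume z: "z \<in> Z"
    have "(\<Sum>u\<in>N - Z. f z u) = (\<Sum>u\<in>(N - Z) \<inter> X. f z u)"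
      by (rule sum.mono_neutral_right) (use fN cut z in auto)
    also have "\<dots> \<le> (\<Sum>u\<in>X. f z u)"
      by (rule sum_mono2[OF fX]) (auto simp: nonneg)
    finally show "(\<Sum>u\<in>N - Z. f z u) \<le> (\<Sum>u\<in>X. f z u)" .
  qed
  also have "\<dots> = (\<Sum>u\<in>X. \<Sum>z\<in>Z. f z u)" by (rule sum.swap)
  also have "\<dots> \<le> (\<Sum>u\<in>X. inn u)"
    unfolding inn_def by (rule sum_mono, rule sum_mono2[OF fN ZN]) (simp add: nonneg)
  also have "\<dots> \<le> (\<Sum>u\<in>X. 1)"
  proof (rule sum_mono)
    fix u assume "u \<in> X"
    then have "u \<in> N - {Src, Snk}" using X(1) unfolding N_def by blast
    then show "inn u \<le> 1" using cons unfolding inn_def by simp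
  qed
  also have "\<dots> = card X" by simp
  finally have "S2 \<le> card X" .
  moreover have "flow_size m A f = out Src" unfolding flow_size_def out_def N_def by simp
  ultimately show ?thesis using e2 by linarith
qed

lemma sndH: "D \<subseteq> {1..m} \<times> {1..m} \<Longrightarrow> B \<subseteq> {1..m} \<times> {1..m} \<Longrightarrow> A \<subseteq> {1..m} \<Longrightarrow>
    snd ` H D B A \<subseteq> Rnode ` {1..m}"
  unfolding H_def by auto

lemma finite_H: "D \<subseteq> {1..m} \<times> {1..m} \<Longrightarrow> B \<subseteq> {1..m} \<times> {1..m} \<Longrightarrow> A \<subseteq> {1..m} \<Longrightarrow>
    finite (H D B A)"
proof -
  assume a: "D \<subseteq> {1..m} \<times> {1..m}" "B \<subseteq> {1..m} \<times> {1..m}" "A \<subseteq> {1..m}"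
  have "H D B A \<subseteq> (Lnode ` {1..m} \<union> Rnode ` {1..m}) \<times> (Lnode ` {1..m} \<union> Rnode ` {1..m})"
    using a unfolding H_def by auto
  then show ?thesis by (rule finite_subset) simp
qed

lemma walk_set_H:
  assumes "D \<subseteq> {1..m} \<times> {1..m}" "B \<subseteq> {1..m} \<times> {1..m}" "A \<subseteq> {1..m}"
    and "walk (H D B A) p" "hd p \<in> Lnode ` A"
  shows "set p \<subseteq> flow_nodes m A - {Src, Snk}"
proof
  fix x assume "x \<in> set p"
  from walk_elems[OF assms(4) this] sndH[OF assms(1-3)] assms(5)
  show "x \<in> flow_nodes m A - {Src, Snk}" by (auto simp: flow_nodes_def)
qed

lemma pa_sub: "D \<subseteq> {1..m} \<times> {1..m} \<Longrightarrow> pa D v \<subseteq> {1..m}"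
  unfolding pa_def by auto

lemma flow_le_pa:
  assumes "D \<subseteq> {1..m} \<times> {1..m}" "A \<subseteq> {1..m}" "is_flow m D B v A f"
  shows "flow_size m A f \<le> card (pa D v)"
proof -
  have "flow_size m A f \<le> card (Rnode ` pa D v)"
  proof (rule flow_cut[OF assms(2,3)])
    show "Rnode ` pa D v \<subseteq> flow_nodes m A - {Src, Snk}"
      using pa_sub[OF assms(1)] by (auto simp: flow_nodes_def)
    show "sepr (H D B A) (Lnode ` A) (Rnode ` pa D v) (Rnode ` pa D v)"
      unfolding sepr_def abwalk_def walk_def by (metis disjoint_iff last_in_set)
  qed
  also have "card (Rnode ` pa D v) = card (pa D v)" by (rule card_image) (simp add: inj_on_def)
  finally show ?thesis .
qed

lemma zero_flow: "is_flow m D B v A (\<lambda>x y. 0)"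
  by (simp add: is_flow_def)

lemma flows_bdd:
  assumes "D \<subseteq> {1..m} \<times> {1..m}" "A \<subseteq> {1..m}"
  shows "bdd_above (flow_size m A ` {f. is_flow m D B v A f})"
  using flow_le_pa[OF assms] by (auto intro!: bdd_aboveI)

lemma max_flow_le:
  assumes "\<And>f. is_flow m D B v A f \<Longrightarrow> flow_size m A f \<le> c"
  shows "max_flow m D B v A \<le> c"
  unfolding max_flow_def
proof (rule cSup_least)
  show "flow_size m A ` {f. is_flow m D B v A f} \<noteq> {}" using zero_flow[of m D B v A] by blast
qed (use assms in auto)

lemma max_flow_ge:
  assumes "D \<subseteq> {1..m} \<times> {1..m}" "A \<subseteq> {1..m}" "is_flow m D B v A f"
  shows "flow_size m A f \<le> max_flow m D B v A"
  unfolding max_flow_def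
  by (rule cSup_upper) (use flows_bdd[OF assms(1,2)] assms(3) in auto)

lemma walkR:
  "walk (H D B A) (Rnode w # q) \<Longrightarrow> \<exists>rs. q = map Rnode rs \<and> successively (\<lambda>a b. (a, b) \<in> D) (w # rs)"
proof (induction q arbitrary: w)
  case Nil then show ?case by simp
next
  case (Cons c q)
  have e: "(Rnode w, c) \<in> H D B A" and wc: "walk (H D B A) (c # q)"
    using Cons.prems by (auto simp: walk_def)
  obtain u where u: "c = Rnode u" "(w, u) \<in> D" using e by (auto simp: H_def)
  obtain rs where rs: "q = map Rnode rs" "successively (\<lambda>a b. (a, b) \<in> D) (u # rs)"
    using Cons.IH wc u by blast
  show ?case using u rs by (intro exI[of _ "u # rs"]) simp
qed

lemma walkL:
  assumes "walk (H D B A) p" "hd p = Lnode a" "last p \<in> Rnode ` S"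
  shows "\<exists>rs. p = Lnode a # map Rnode rs \<and> half_trek D B a rs"
proof -
  obtain q where pq: "p = Lnode a # q" using assms(1,2) by (cases p) (auto simp: walk_def)
  have "q \<noteq> []" using pq assms(3) by auto
  then obtain c q' where q: "q = c # q'" by (cases q) auto
  have e: "(Lnode a, c) \<in> H D B A" and wc: "walk (H D B A) (c # q')"
    using assms(1) pq q by (auto simp: walk_def)
  obtain u where u: "c = Rnode u" "u = a \<or> (a, u) \<in> B" using e by (auto simp: H_def)
  obtain rs where rs: "q' = map Rnode rs" "successively (\<lambda>a b. (a, b) \<in> D) (u # rs)"
    using walkR wc u by blast
  show ?thesis using u rs pq q
    by (intro exI[of _ "u # rs"]) (auto simp: half_trek_def)
qed

fun unL :: "fnode \<Rightarrow> nat" where "unL (Lnode a) = a" | "unL _ = 0"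
fun unR :: "fnode \<Rightarrow> nat" where "unR (Rnode a) = a" | "unR _ = 0"

lemma unR_map: "map unR (map Rnode rs) = rs"
  by (induction rs) auto

lemma unR_comp [simp]: "unR \<circ> Rnode = id"
  by auto

lemma flow_to_system:
  assumes VD: "D \<subseteq> {1..m} \<times> {1..m}" and VB: "B \<subseteq> {1..m} \<times> {1..m}" and VA: "A \<subseteq> {1..m}"
    and Av: "A \<inter> ({v} \<union> sib B v) = {}"
    and mf: "max_flow m D B v A = real (card (pa D v))"
  shows "\<exists>Y \<subseteq> A. htc_criterion m D B v Y"
proof -
  define k where "k = card (pa D v)"
  define LA where "LA = Lnode ` A"
  define RP where "RP = Rnode ` pa D v"
  have fA: "finite A" using VA finite_subset by blast
  have fpa: "finite (pa D v)" using pa_sub[OF VD] finite_subset by blast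
  have cutk: "\<forall>X. finite X \<longrightarrow> sepr (H D B A) LA RP X \<longrightarrow> k \<le> card X"
  proof (intro allI impI)
    fix X assume fX: "finite X" and sX: "sepr (H D B A) LA RP X"
    define X' where "X' = X \<inter> (flow_nodes m A - {Src, Snk})"
    have sX': "sepr (H D B A) LA RP X'"
      unfolding sepr_def
    proof (intro allI impI)
      fix p assume ab: "abwalk (H D B A) LA RP p"
      then have "set p \<inter> X \<noteq> {}" using sX by (auto simp: sepr_def)
      moreover have "set p \<subseteq> flow_nodes m A - {Src, Snk}"
        using walk_set_H[OF VD VB VA] ab by (auto simp: abwalk_def LA_def)
      ultimately show "set p \<inter> X' \<noteq> {}" unfolding X'_def by blast
    qed
    have "\<And>f. is_flow m D B v A f \<Longrightarrow> flow_size m A f \<le> card X'"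
      by (rule flow_cut[OF VA]) (use sX' in \<open>auto simp: X'_def LA_def RP_def\<close>)
    then have "max_flow m D B v A \<le> card X'" by (rule max_flow_le)
    moreover have "card X' \<le> card X" unfolding X'_def using fX by (simp add: card_mono)
    ultimately have "real k \<le> real (card X)" using mf k_def by linarith
    then show "k \<le> card X" by simp
  qed
  obtain W where W: "card W = k" "finite W" "disj_walks (H D B A) LA RP W"
    using menger_walks[OF finite_H[OF VD VB VA]] cutk unfolding LA_def using fA by blast
  have Wab: "\<And>p. p \<in> W \<Longrightarrow> abwalk (H D B A) LA RP p" using W(3) by (simp add: disj_walks_def)
  have Wd: "\<forall>p\<in>W. \<forall>q\<in>W. p \<noteq> q \<longrightarrow> set p \<inter> set q = {}" using W(3) by (simp add: disj_walks_def)
  define s where "s p = unL (hd p)" for p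
  have shape: "\<And>p. p \<in> W \<Longrightarrow> s p \<in> A \<and> p = Lnode (s p) # map Rnode (map unR (tl p))
       \<and> half_trek D B (s p) (map unR (tl p))"
  proof -
    fix p assume p: "p \<in> W"
    then obtain a where a: "a \<in> A" "hd p = Lnode a" using Wab by (auto simp: abwalk_def LA_def)
    obtain rs where rs: "p = Lnode a # map Rnode rs" "half_trek D B a rs"
      using walkL[of D B A p a "pa D v"] Wab[OF p] a unfolding abwalk_def RP_def by blast
    have "s p = a" using a by (simp add: s_def)
    then show "s p \<in> A \<and> p = Lnode (s p) # map Rnode (map unR (tl p)) \<and> half_trek D B (s p) (map unR (tl p))"
      using rs a by (simp add: unR_map)
  qed
  have hdinj: "inj_on hd W" by (rule disj_inj[OF Wd]) (use Wab in \<open>auto simp: abwalk_def walk_def\<close>)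
  have sinj: "inj_on s W"
  proof (rule inj_onI)
    fix p q assume "p \<in> W" "q \<in> W" "s p = s q"
    then have "hd p = hd q" using shape by (metis list.sel(1))
    then show "p = q" using hdinj \<open>p \<in> W\<close> \<open>q \<in> W\<close> by (simp add: inj_on_def)
  qed
  define Y where "Y = s ` W"
  define pw where "pw = inv_into W s"
  define \<pi> where "\<pi> y = map unR (tl (pw y))" for y
  have pwY: "\<And>y. y \<in> Y \<Longrightarrow> pw y \<in> W \<and> s (pw y) = y"
    unfolding pw_def Y_def by (simp add: inv_into_into f_inv_into_f)
  have YA: "Y \<subseteq> A" unfolding Y_def using shape by auto
  have cY: "card Y = k" unfolding Y_def using card_image[OF sinj] W(1) by simp
  have pform: "\<And>y. y \<in> Y \<Longrightarrow> pw y = Lnode y # map Rnode (\<pi> y) \<and> half_trek D B y (\<pi> y)"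
    using shape pwY unfolding \<pi>_def by metis
  have lastp: "\<And>y. y \<in> Y \<Longrightarrow> last (pw y) = Rnode (last (\<pi> y))"
  proof -
    fix y assume y: "y \<in> Y"
    have "\<pi> y \<noteq> []" using pform[OF y] by (simp add: half_trek_def)
    then show "last (pw y) = Rnode (last (\<pi> y))" using pform[OF y] by (simp add: last_map)
  qed
  have lastpa: "\<And>y. y \<in> Y \<Longrightarrow> last (\<pi> y) \<in> pa D v"
  proof -
    fix y assume y: "y \<in> Y"
    have "last (pw y) \<in> RP" using Wab pwY[OF y] by (simp add: abwalk_def)
    then show "last (\<pi> y) \<in> pa D v" using lastp[OF y] by (auto simp: RP_def)
  qed
  have pwdisj: "\<And>y y'. y \<in> Y \<Longrightarrow> y' \<in> Y \<Longrightarrow> y \<noteq> y' \<Longrightarrow> set (pw y) \<inter> set (pw y') = {}"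
    using Wd pwY by metis
  have rdisj: "\<And>y y'. y \<in> Y \<Longrightarrow> y' \<in> Y \<Longrightarrow> y \<noteq> y' \<Longrightarrow> set (\<pi> y) \<inter> set (\<pi> y') = {}"
  proof -
    fix y y' assume a: "y \<in> Y" "y' \<in> Y" "y \<noteq> y'"
    have "Rnode ` set (\<pi> y) \<subseteq> set (pw y)" "Rnode ` set (\<pi> y') \<subseteq> set (pw y')"
      using pform a by (metis list.set_intros(2) set_map subsetI)+
    then show "set (\<pi> y) \<inter> set (\<pi> y') = {}" using pwdisj[OF a] by blast
  qed
  have linj: "inj_on (\<lambda>y. last (\<pi> y)) Y"
  proof (rule inj_onI, rule ccontr)
    fix y y' assume a: "y \<in> Y" "y' \<in> Y" "last (\<pi> y) = last (\<pi> y')" "y \<noteq> y'"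
    have "last (\<pi> y) \<in> set (\<pi> y)" "last (\<pi> y') \<in> set (\<pi> y')"
      using pform a(1,2) by (auto simp: half_trek_def)
    then show False using rdisj[OF a(1,2,4)] a(3) by auto
  qed
  have bij: "bij_betw (\<lambda>y. last (\<pi> y)) Y (pa D v)"
    by (rule bij_of_card[OF linj]) (use lastpa fpa cY k_def in auto)
  have "ht_system D B Y (pa D v)"
    unfolding ht_system_def
    by (rule exI[of _ \<pi>]) (use pform bij rdisj in auto)
  moreover have "Y \<subseteq> {1..m}" using YA VA by blast
  moreover have "Y \<inter> ({v} \<union> sib B v) = {}" using YA Av by blast
  ultimately have "htc_criterion m D B v Y" using cY k_def by (simp add: htc_criterion_def)
  then show ?thesis using YA by blast
qed




lemma distinct_shortcut:
  "successively P xs \<Longrightarrow> xs \<noteq> [] \<Longrightarrow> \<exists>ys. distinct ys \<and> ys \<noteq> [] \<and> hd ys = hd xs \<and> last ys = last xs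
     \<and> set ys \<subseteq> set xs \<and> successively P ys"
proof (induction "length xs" arbitrary: xs rule: less_induct)
  case less
  show ?case
  proof (cases "distinct xs")
    case True then show ?thesis using less.prems by blast
  next
    case False
    then obtain a y b c where xs: "xs = a @ [y] @ b @ [y] @ c" using not_distinct_decomp by blast
    define xs' where "xs' = a @ [y] @ c"
    have "successively P xs'"
      using less.prems(1) unfolding xs xs'_def
      by (auto simp: successively_append_iff successively_Cons split: if_splits)
    moreover have "xs' \<noteq> []" by (simp add: xs'_def)
    moreover have "length xs' < length xs" by (simp add: xs xs'_def)
    ultimately obtain ys where ys: "distinct ys \<and> ys \<noteq> [] \<and> hd ys = hd xs' \<and> last ys = last xs'
       \<and> set ys \<subseteq> set xs' \<and> successively P ys" using less.hyps by blast
    have "hd xs' = hd xs" by (cases a) (auto simp: xs xs'_def)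
    moreover have "last xs' = last xs" by (cases c) (auto simp: xs xs'_def)
    moreover have "set xs' \<subseteq> set xs" by (auto simp: xs xs'_def)
    ultimately show ?thesis using ys by auto
  qed
qed

definition epath :: "'a list \<Rightarrow> 'a \<Rightarrow> 'a \<Rightarrow> bool" where
  "epath p x z \<longleftrightarrow> (x, z) \<in> set (zip p (tl p))"

lemma epath_Nil [simp]: "\<not> epath [] x z" by (simp add: epath_def)

lemma epath_Cons: "epath (a # p) x z \<longleftrightarrow> (p \<noteq> [] \<and> x = a \<and> z = hd p) \<or> epath p x z"
  by (cases p) (auto simp: epath_def)

lemma epath_set: "epath p x z \<Longrightarrow> x \<in> set p \<and> z \<in> set p"
  by (induction p) (auto simp: epath_Cons)

lemma epath_succ: "successively R p \<Longrightarrow> epath p x z \<Longrightarrow> R x z"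
  by (induction p rule: induct_list012) (auto simp: epath_Cons)

lemma in_sum:
  "distinct p \<Longrightarrow> finite N \<Longrightarrow> set p \<subseteq> N \<Longrightarrow>
    (\<Sum>u\<in>N. if epath p u x then 1 else 0 :: real) = (if x \<in> set (tl p) then 1 else 0)"
proof (induction p)
  case Nil then show ?case by simp
next
  case (Cons a p)
  have aN: "a \<in> N" and anp: "a \<notin> set p" using Cons.prems by auto
  have "\<And>u. (if epath (a # p) u x then 1 else 0 :: real) =
          (if u = a then (if p \<noteq> [] \<and> x = hd p then 1 else 0) else 0) + (if epath p u x then 1 else 0)"
    using anp by (auto simp: epath_Cons dest: epath_set)
  then have "(\<Sum>u\<in>N. if epath (a # p) u x then 1 else 0 :: real) =
      (\<Sum>u\<in>N. (if u = a then (if p \<noteq> [] \<and> x = hd p then 1 else 0) else 0)) + (\<Sum>u\<in>N. if epath p u x then 1 else 0)"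
    by (simp add: sum.distrib)
  also have "\<dots> = (if p \<noteq> [] \<and> x = hd p then 1 else 0) + (if x \<in> set (tl p) then 1 else 0)"
    using Cons aN by (simp add: sum.delta)
  also have "\<dots> = (if x \<in> set (tl (a # p)) then 1 else 0)"
    using Cons.prems(1) by (cases p) auto
  finally show ?case .
qed

lemma out_sum:
  "distinct p \<Longrightarrow> finite N \<Longrightarrow> set p \<subseteq> N \<Longrightarrow>
    (\<Sum>w\<in>N. if epath p x w then 1 else 0 :: real) = (if x \<in> set (butlast p) then 1 else 0)"
proof (induction p)
  case Nil then show ?case by simp
next
  case (Cons a p)
  have anp: "a \<notin> set p" using Cons.prems by auto
  have "\<And>w. (if epath (a # p) x w then 1 else 0 :: real) =
          (if w = hd p then (if p \<noteq> [] \<and> x = a then 1 else 0) else 0) + (if epath p x w then 1 else 0)"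
    using anp by (auto simp: epath_Cons dest: epath_set)
  then have "(\<Sum>w\<in>N. if epath (a # p) x w then 1 else 0 :: real) =
      (\<Sum>w\<in>N. (if w = hd p then (if p \<noteq> [] \<and> x = a then 1 else 0) else 0)) + (\<Sum>w\<in>N. if epath p x w then 1 else 0)"
    by (simp add: sum.distrib)
  also have "\<dots> = (if p \<noteq> [] \<and> x = a then 1 else 0) + (if x \<in> set (butlast p) then 1 else 0)"
    using Cons by (cases p) (simp_all add: sum.delta)
  also have "\<dots> = (if x \<in> set (butlast (a # p)) then 1 else 0)"
  proof (cases p)
    case Nil then show ?thesis by simp
  next
    case (Cons b q)
    have "x = a \<Longrightarrow> x \<notin> set (butlast p)" using anp by (auto dest: in_set_butlastD)
    then show ?thesis using Cons by auto
  qed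
  finally show ?case .
qed

lemma disj_count:
  assumes "finite Y" "\<And>y y'. y \<in> Y \<Longrightarrow> y' \<in> Y \<Longrightarrow> y \<noteq> y' \<Longrightarrow> M y \<inter> M y' = {}"
  shows "(\<Sum>y\<in>Y. if x \<in> M y then 1 else 0 :: real) \<le> 1"
proof (cases "\<exists>y0\<in>Y. x \<in> M y0")
  case True
  then obtain y0 where y0: "y0 \<in> Y" "x \<in> M y0" by blast
  have "(\<Sum>y\<in>Y. if x \<in> M y then 1 else 0 :: real) = 1 + (\<Sum>y\<in>Y - {y0}. if x \<in> M y then 1 else 0)"
    using sum.remove[OF assms(1) y0(1), of "\<lambda>y. if x \<in> M y then 1 else 0 :: real"] y0 by simp
  also have "(\<Sum>y\<in>Y - {y0}. if x \<in> M y then 1 else 0 :: real) = 0"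
  proof (rule sum.neutral, rule ballI)
    fix y assume y: "y \<in> Y - {y0}"
    then have "M y \<inter> M y0 = {}" using assms(2) y0(1) by blast
    then show "(if x \<in> M y then 1 else 0 :: real) = 0" using y0(2) by auto
  qed
  finally show ?thesis by simp
next
  case False
  then show ?thesis by simp
qed

lemma system_to_flow:
  assumes VD: "D \<subseteq> {1..m} \<times> {1..m}" and VB: "B \<subseteq> {1..m} \<times> {1..m}" and VA: "A \<subseteq> {1..m}"
    and YA: "Y \<subseteq> A" and hc: "htc_criterion m D B v Y"
  shows "real (card (pa D v)) \<le> max_flow m D B v A"
proof -
  have cY: "card Y = card (pa D v)" and hs: "ht_system D B Y (pa D v)"
    using hc by (auto simp: htc_criterion_def)
  obtain \<pi> where ht: "\<forall>y\<in>Y. half_trek D B y (\<pi> y)"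
    and bij: "bij_betw (\<lambda>y. last (\<pi> y)) Y (pa D v)"
    and dj0: "\<forall>y\<in>Y. \<forall>y'\<in>Y. y \<noteq> y' \<longrightarrow> {y} \<inter> {y'} = {} \<and> set (\<pi> y) \<inter> set (\<pi> y') = {}"
    using hs unfolding ht_system_def by (elim exE conjE) (rule that)
  have dj: "\<forall>y\<in>Y. \<forall>y'\<in>Y. y \<noteq> y' \<longrightarrow> set (\<pi> y) \<inter> set (\<pi> y') = {}"
    using dj0 by simp
  have fA: "finite A" using VA finite_subset by blast
  have fY: "finite Y" using YA fA finite_subset by blast
  define N where "N = flow_nodes m A"
  have fN: "finite N" unfolding N_def using fA by (rule finite_flow_nodes)
  define FE where "FE = flow_edges D B v A"
  define Q where "Q y rs \<longleftrightarrow> distinct rs \<and> rs \<noteq> [] \<and> hd rs = hd (\<pi> y) \<and> last rs = last (\<pi> y)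
     \<and> set rs \<subseteq> set (\<pi> y) \<and> successively (\<lambda>a b. (a, b) \<in> D) rs" for y rs
  define \<rho> where "\<rho> y = (SOME rs. Q y rs)" for y
  have \<rho>: "\<And>y. y \<in> Y \<Longrightarrow> Q y (\<rho> y)"
  proof -
    fix y assume y: "y \<in> Y"
    have "\<exists>rs. Q y rs" unfolding Q_def
      by (rule distinct_shortcut) (use ht y in \<open>auto simp: half_trek_def\<close>)
    then show "Q y (\<rho> y)" unfolding \<rho>_def by (rule someI_ex)
  qed
  have piV: "\<And>y. y \<in> Y \<Longrightarrow> set (\<pi> y) \<subseteq> {1..m}"
  proof
    fix y x assume y: "y \<in> Y" and x: "x \<in> set (\<pi> y)"
    have w: "walk D (\<pi> y)" using ht y by (auto simp: half_trek_def walk_def)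
    have "hd (\<pi> y) = y \<or> (y, hd (\<pi> y)) \<in> B" using ht y by (auto simp: half_trek_def)
    then have "hd (\<pi> y) \<in> {1..m}" using y YA VA VB by auto
    then show "x \<in> {1..m}" using walk_elems[OF w x] VD by auto
  qed
  define mid where "mid y = Lnode y # map Rnode (\<rho> y)" for y
  define path where "path y = Src # mid y @ [Snk]" for y
  have pdist: "\<And>y. y \<in> Y \<Longrightarrow> distinct (path y)"
    using \<rho> by (auto simp: path_def mid_def Q_def distinct_map inj_on_def)
  have pN: "\<And>y. y \<in> Y \<Longrightarrow> set (path y) \<subseteq> N"
  proof -
    fix y assume y: "y \<in> Y"
    have "set (\<rho> y) \<subseteq> {1..m}" using \<rho>[OF y] piV[OF y] by (auto simp: Q_def)
    then show "set (path y) \<subseteq> N" using y YA by (auto simp: path_def mid_def N_def flow_nodes_def)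
  qed
  have psucc: "\<And>y. y \<in> Y \<Longrightarrow> successively (\<lambda>a b. (a, b) \<in> FE) (path y)"
  proof -
    fix y assume y: "y \<in> Y"
    define r where "r = \<rho> y"
    have Qr: "Q y r" using \<rho>[OF y] by (simp add: r_def)
    have s1: "successively (\<lambda>a b. (a, b) \<in> FE) (map Rnode r)"
      unfolding successively_map
      by (rule successively_mono[of "\<lambda>a b. (a, b) \<in> D"]) (use Qr in \<open>auto simp: Q_def FE_def flow_edges_def\<close>)
    have "last r \<in> pa D v" using Qr bij y by (auto simp: Q_def bij_betw_def)
    then have "(last (map Rnode r), Snk) \<in> FE" using Qr by (auto simp: Q_def FE_def flow_edges_def last_map)
    then have s2: "successively (\<lambda>a b. (a, b) \<in> FE) (map Rnode r @ [Snk])"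
      using s1 by (simp add: successively_append_iff)
    have "hd r = y \<or> (y, hd r) \<in> B" using Qr ht y by (auto simp: Q_def half_trek_def)
    then have "(Lnode y, hd (map Rnode r @ [Snk])) \<in> FE"
      using Qr y YA by (cases r) (auto simp: Q_def FE_def flow_edges_def)
    then have s3: "successively (\<lambda>a b. (a, b) \<in> FE) (Lnode y # map Rnode r @ [Snk])"
      using s2 by (simp add: successively_Cons)
    have "(Src, Lnode y) \<in> FE" using y YA by (auto simp: FE_def flow_edges_def)
    then show "successively (\<lambda>a b. (a, b) \<in> FE) (path y)"
      using s3 unfolding path_def mid_def r_def by (simp add: successively_Cons)
  qed
  have middj: "\<And>y y'. y \<in> Y \<Longrightarrow> y' \<in> Y \<Longrightarrow> y \<noteq> y' \<Longrightarrow> set (mid y) \<inter> set (mid y') = {}"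
  proof -
    fix y y' assume a: "y \<in> Y" "y' \<in> Y" "y \<noteq> y'"
    have "set (\<rho> y) \<inter> set (\<rho> y') = {}"
      using \<rho>[OF a(1)] \<rho>[OF a(2)] dj a unfolding Q_def by blast
    then show "set (mid y) \<inter> set (mid y') = {}" using a(3) by (auto simp: mid_def)
  qed
  define f where "f x z = (\<Sum>y\<in>Y. if epath (path y) x z then 1 else 0 :: real)" for x z
  have inf: "\<And>x. (\<Sum>u\<in>N. f u x) = (\<Sum>y\<in>Y. if x \<in> set (tl (path y)) then 1 else 0)"
  proof -
    fix x
    have "(\<Sum>u\<in>N. f u x) = (\<Sum>y\<in>Y. \<Sum>u\<in>N. if epath (path y) u x then 1 else 0)"
      unfolding f_def by (rule sum.swap)
    also have "\<dots> = (\<Sum>y\<in>Y. if x \<in> set (tl (path y)) then 1 else 0)"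
      by (rule sum.cong[OF refl], rule in_sum) (use pdist fN pN in auto)
    finally show "(\<Sum>u\<in>N. f u x) = (\<Sum>y\<in>Y. if x \<in> set (tl (path y)) then 1 else 0)" .
  qed
  have outf: "\<And>x. (\<Sum>w\<in>N. f x w) = (\<Sum>y\<in>Y. if x \<in> set (butlast (path y)) then 1 else 0)"
  proof -
    fix x
    have "(\<Sum>w\<in>N. f x w) = (\<Sum>y\<in>Y. \<Sum>w\<in>N. if epath (path y) x w then 1 else 0)"
      unfolding f_def by (rule sum.swap)
    also have "\<dots> = (\<Sum>y\<in>Y. if x \<in> set (butlast (path y)) then 1 else 0)"
      by (rule sum.cong[OF refl], rule out_sum) (use pdist fN pN in auto)
    finally show "(\<Sum>w\<in>N. f x w) = (\<Sum>y\<in>Y. if x \<in> set (butlast (path y)) then 1 else 0)" .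
  qed
  have tlp: "\<And>y. tl (path y) = mid y @ [Snk]" by (simp add: path_def)
  have blp: "\<And>y. butlast (path y) = Src # mid y" by (simp add: path_def butlast_append)
  have isf: "is_flow m D B v A f"
    unfolding is_flow_def
  proof (intro conjI allI impI ballI)
    fix x y show "0 \<le> f x y" unfolding f_def by (simp add: sum_nonneg)
  next
    fix x z assume nfe: "(x, z) \<notin> flow_edges D B v A"
    have "\<not> epath (path y) x z" if y: "y \<in> Y" for y
      using epath_succ[OF psucc[OF y], of x z] nfe unfolding FE_def by auto
    then show "f x z = 0" unfolding f_def by simp
  next
    fix x assume x: "x \<in> flow_nodes m A - {Src, Snk}"
    have "(\<Sum>u\<in>flow_nodes m A. f u x) = (\<Sum>y\<in>Y. if x \<in> set (mid y) then 1 else 0)"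
      using inf[of x] x unfolding N_def tlp by simp
    moreover have "(\<Sum>w\<in>flow_nodes m A. f x w) = (\<Sum>y\<in>Y. if x \<in> set (mid y) then 1 else 0)"
      using outf[of x] x unfolding N_def blp by simp
    moreover have "(\<Sum>y\<in>Y. if x \<in> set (mid y) then 1 else 0 :: real) \<le> 1"
      by (rule disj_count[OF fY middj])
    ultimately show "(\<Sum>u\<in>flow_nodes m A. f u x) = (\<Sum>w\<in>flow_nodes m A. f x w)"
      "(\<Sum>w\<in>flow_nodes m A. f x w) \<le> 1" by simp_all
  qed
  have "flow_size m A f = card Y"
    unfolding flow_size_def using outf[of Src] unfolding N_def blp by simp
  then have "real (card (pa D v)) = flow_size m A f" using cY by simp
  also have "\<dots> \<le> max_flow m D B v A" by (rule max_flow_ge[OF VD VA isf])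
  finally show ?thesis .
qed




lemma htc_A_sub: "S \<subseteq> {1..m} \<Longrightarrow> htc_A m D B S v \<subseteq> {1..m}"
  unfolding htc_A_def by auto

lemma htc_A_av: "htc_A m D B S v \<inter> ({v} \<union> sib B v) = {}"
  unfolding htc_A_def by auto

lemma step_char:
  assumes VD: "D \<subseteq> {1..m} \<times> {1..m}" and VB: "B \<subseteq> {1..m} \<times> {1..m}" and S: "S \<subseteq> {1..m}"
  shows "max_flow m D B v (htc_A m D B S v) = real (card (pa D v)) \<longleftrightarrow>
         (\<exists>Y \<subseteq> htc_A m D B S v. htc_criterion m D B v Y)"
proof
  assume "max_flow m D B v (htc_A m D B S v) = real (card (pa D v))"
  then show "\<exists>Y \<subseteq> htc_A m D B S v. htc_criterion m D B v Y"
    by (rule flow_to_system[OF VD VB htc_A_sub[OF S] htc_A_av])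
next
  assume "\<exists>Y \<subseteq> htc_A m D B S v. htc_criterion m D B v Y"
  then obtain Y where Y: "Y \<subseteq> htc_A m D B S v" "htc_criterion m D B v Y" by blast
  have "real (card (pa D v)) \<le> max_flow m D B v (htc_A m D B S v)"
    by (rule system_to_flow[OF VD VB htc_A_sub[OF S] Y])
  moreover have "max_flow m D B v (htc_A m D B S v) \<le> real (card (pa D v))"
    by (rule max_flow_le) (rule flow_le_pa[OF VD htc_A_sub[OF S]])
  ultimately show "max_flow m D B v (htc_A m D B S v) = real (card (pa D v))" by simp
qed

lemma step_mono: "S \<subseteq> htc_step m D B v S" and step_sub: "htc_step m D B v S \<subseteq> insert v S"
  unfolding htc_step_def by auto

lemma fold_steps:
  "set xs \<subseteq> {1..m} \<Longrightarrow> S \<subseteq> {1..m} \<Longrightarrow> S \<subseteq> fold (htc_step m D B) xs S \<and> fold (htc_step m D B) xs S \<subseteq> {1..m}"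
proof (induction xs arbitrary: S)
  case Nil then show ?case by simp
next
  case (Cons v xs)
  have "htc_step m D B v S \<subseteq> {1..m}" using step_sub[of m D B v S] Cons.prems by auto
  then show ?case using Cons.IH[of "htc_step m D B v S"] Cons.prems step_mono[of S m D B v] by auto
qed

lemma fold_fix:
  "set xs \<subseteq> {1..m} \<Longrightarrow> S \<subseteq> {1..m} \<Longrightarrow> fold (htc_step m D B) xs S = S \<Longrightarrow> \<forall>v\<in>set xs. htc_step m D B v S = S"
proof (induction xs arbitrary: S)
  case Nil then show ?case by simp
next
  case (Cons v xs)
  have s1: "htc_step m D B v S \<subseteq> {1..m}" using step_sub[of m D B v S] Cons.prems by auto
  have "htc_step m D B v S \<subseteq> fold (htc_step m D B) xs (htc_step m D B v S)"
    using fold_steps[where xs=xs and S="htc_step m D B v S" and D=D and B=B and m=m] s1 Cons.prems by auto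
  then have "htc_step m D B v S \<subseteq> S" using Cons.prems by simp
  then have e: "htc_step m D B v S = S" using step_mono[of S m D B v] by blast
  then have "fold (htc_step m D B) xs S = S" using Cons.prems by simp
  then show ?case using Cons.IH[of S] Cons.prems e by auto
qed

lemma pass_props:
  "S \<subseteq> {1..m} \<Longrightarrow> S \<subseteq> htc_pass m D B S \<and> htc_pass m D B S \<subseteq> {1..m}"
  unfolding htc_pass_def by (rule fold_steps) auto

definition Inv :: "nat \<Rightarrow> (nat \<times> nat) set \<Rightarrow> (nat \<times> nat) set \<Rightarrow> nat set \<Rightarrow> bool" where
  "Inv m D B S \<longleftrightarrow> S \<subseteq> {1..m} \<and> (\<exists>Ys R. R \<subseteq> S \<times> S \<and> strict_linear_order_on S R \<and>
     (\<forall>v\<in>S. htc_criterion m D B v (Ys v) \<and> (\<forall>w \<in> Ys v \<inter> htr m D B v. (w, v) \<in> R)))"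

lemma Inv_step:
  assumes VD: "D \<subseteq> {1..m} \<times> {1..m}" and VB: "B \<subseteq> {1..m} \<times> {1..m}"
    and v: "v \<in> {1..m}" and I: "Inv m D B S"
  shows "Inv m D B (htc_step m D B v S)"
proof (cases "htc_step m D B v S = S")
  case True then show ?thesis using I by simp
next
  case False
  have S: "S \<subseteq> {1..m}" using I by (simp add: Inv_def)
  obtain Ys R where R: "R \<subseteq> S \<times> S" "strict_linear_order_on S R"
    and C: "\<forall>u\<in>S. htc_criterion m D B u (Ys u) \<and> (\<forall>w \<in> Ys u \<inter> htr m D B u. (w, u) \<in> R)"
    using I unfolding Inv_def by blast
  have vS: "v \<notin> S" and mf: "max_flow m D B v (htc_A m D B S v) = real (card (pa D v))"
    and st: "htc_step m D B v S = insert v S"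
    using False by (auto simp: htc_step_def split: if_splits)
  obtain Y where Y: "Y \<subseteq> htc_A m D B S v" "htc_criterion m D B v Y"
    using step_char[OF VD VB S] mf by blast
  define R' where "R' = R \<union> S \<times> {v}"
  define Ys' where "Ys' = Ys(v := Y)"
  have "R' \<subseteq> insert v S \<times> insert v S" using R(1) by (auto simp: R'_def)
  moreover have "strict_linear_order_on (insert v S) R'"
  proof -
    have t: "trans R" and i: "irrefl R" and to: "total_on S R"
      using R(2) by (auto simp: strict_linear_order_on_def)
    have "trans R'"
      unfolding trans_def R'_def
    proof (intro allI impI)
      fix a b c assume ab: "(a, b) \<in> R \<union> S \<times> {v}" and bc: "(b, c) \<in> R \<union> S \<times> {v}"
      show "(a, c) \<in> R \<union> S \<times> {v}"
      proof (cases "(a, b) \<in> R")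
        case True
        then have aS: "a \<in> S" using R(1) by auto
        show ?thesis
        proof (cases "(b, c) \<in> R")
          case True then show ?thesis using \<open>(a, b) \<in> R\<close> t by (meson UnI1 transD)
        next
          case False then show ?thesis using bc aS by auto
        qed
      next
        case False
        then have "b = v" using ab by auto
        then have "(b, c) \<notin> R" using R(1) vS by auto
        moreover have "b \<notin> S" using \<open>b = v\<close> vS by simp
        ultimately show ?thesis using bc by auto
      qed
    qed
    moreover have "irrefl R'" using i vS by (auto simp: R'_def irrefl_def)
    moreover have "total_on (insert v S) R'" using to by (auto simp: R'_def total_on_def)
    ultimately show ?thesis by (simp add: strict_linear_order_on_def)
  qed
  moreover have "\<forall>u\<in>insert v S. htc_criterion m D B u (Ys' u) \<and> (\<forall>w \<in> Ys' u \<inter> htr m D B u. (w, u) \<in> R')"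
  proof
    fix u assume u: "u \<in> insert v S"
    show "htc_criterion m D B u (Ys' u) \<and> (\<forall>w \<in> Ys' u \<inter> htr m D B u. (w, u) \<in> R')"
    proof (cases "u = v")
      case True
      have "\<forall>w \<in> Y \<inter> htr m D B v. (w, v) \<in> R'"
        using Y(1) by (auto simp: htc_A_def R'_def)
      then show ?thesis using True Y(2) by (simp add: Ys'_def)
    next
      case False
      then show ?thesis using u C by (auto simp: Ys'_def R'_def)
    qed
  qed
  moreover have "insert v S \<subseteq> {1..m}" using S v by auto
  ultimately show ?thesis unfolding Inv_def st by blast
qed

lemma Inv_pass:
  assumes VD: "D \<subseteq> {1..m} \<times> {1..m}" and VB: "B \<subseteq> {1..m} \<times> {1..m}" and I: "Inv m D B S"
  shows "Inv m D B (htc_pass m D B S)"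
proof -
  have "\<And>xs S. set xs \<subseteq> {1..m} \<Longrightarrow> Inv m D B S \<Longrightarrow> Inv m D B (fold (htc_step m D B) xs S)"
  proof -
    fix xs S show "set xs \<subseteq> {1..m} \<Longrightarrow> Inv m D B S \<Longrightarrow> Inv m D B (fold (htc_step m D B) xs S)"
    proof (induction xs arbitrary: S)
      case Nil then show ?case by simp
    next
      case (Cons a xs)
      have "Inv m D B (htc_step m D B a S)" using Inv_step[OF VD VB, of a S] Cons.prems by simp
      then show ?case using Cons.IH Cons.prems by simp
    qed
  qed
  moreover have "set [1..<Suc m] \<subseteq> {1..m}" by auto
  ultimately show ?thesis unfolding htc_pass_def using I by blast
qed

lemma Inv_init: "Inv m D B {v \<in> {1..m}. pa D v = {}}"
proof -
  define S0 where "S0 = {v \<in> {1..m}. pa D v = {}}"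
  define R where "R = {(a, b). a \<in> S0 \<and> b \<in> S0 \<and> a < (b::nat)}"
  have "R \<subseteq> S0 \<times> S0" by (auto simp: R_def)
  moreover have "strict_linear_order_on S0 R"
    by (auto simp: strict_linear_order_on_def R_def trans_def irrefl_def total_on_def)
  moreover have "\<forall>v\<in>S0. htc_criterion m D B v {} \<and> (\<forall>w \<in> {} \<inter> htr m D B v. (w, v) \<in> R)"
    by (auto simp: S0_def htc_criterion_def ht_system_def bij_betw_def)
  ultimately have "\<exists>Ys R. R \<subseteq> S0 \<times> S0 \<and> strict_linear_order_on S0 R \<and>
     (\<forall>v\<in>S0. htc_criterion m D B v (Ys v) \<and> (\<forall>w \<in> Ys v \<inter> htr m D B v. (w, v) \<in> R))"
    by (intro exI[of _ "\<lambda>_. {}"] exI[of _ R]) simp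
  moreover have "S0 \<subseteq> {1..m}" by (auto simp: S0_def)
  ultimately show ?thesis unfolding Inv_def S0_def by blast
qed

lemma minimal_elem:
  assumes R: "strict_linear_order_on V R" and fV: "finite V" and ne: "x \<in> Q" and QV: "Q \<subseteq> V"
  shows "\<exists>z\<in>Q. \<forall>y. (y, z) \<in> R \<inter> V \<times> V \<longrightarrow> y \<notin> Q"
proof -
  have t: "trans R" and i: "irrefl R" using R by (auto simp: strict_linear_order_on_def)
  have tr: "trans (R \<inter> V \<times> V)" using t by (auto simp: trans_def)
  have "acyclic (R \<inter> V \<times> V)"
    unfolding acyclic_def using trancl_id[OF tr] i by (auto simp: irrefl_def)
  moreover have "finite (R \<inter> V \<times> V)" using fV by (auto intro: finite_subset)
  ultimately have "wf (R \<inter> V \<times> V)" by (metis finite_acyclic_wf)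
  then show ?thesis using ne unfolding wf_eq_minimal by blast
qed

theorem mainTheorem9:
  fixes m :: nat and D B :: "(nat \<times> nat) set"
  assumes "D \<subseteq> {1..m} \<times> {1..m}" and "B \<subseteq> {1..m} \<times> {1..m}"
    and "sym B" and "\<forall>v. (v, v) \<notin> D" and "\<forall>v. (v, v) \<notin> B"
  shows "HTC_identifiable m D B \<longleftrightarrow> htc_procedure m D B = Some {1..m}"
proof
  note VD = assms(1) and VB = assms(2)
  assume "HTC_identifiable m D B"
  then obtain Ys R where C: "\<forall>v\<in>{1..m}. htc_criterion m D B v (Ys v)"
    and R: "strict_linear_order_on {1..m} R"
    and O: "\<forall>v\<in>{1..m}. \<forall>w \<in> Ys v \<inter> htr m D B v. (w, v) \<in> R"
    unfolding HTC_identifiable_def by blast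
  define b where "b S \<longleftrightarrow> S \<noteq> {1..m} \<and> htc_pass m D B S \<noteq> S" for S
  define S0 where "S0 = {v \<in> {1..m}. pa D v = {}}"
  have "\<exists>t. while_option b (htc_pass m D B) S0 = Some t"
  proof (rule measure_while_option_Some[where P = "\<lambda>S. S \<subseteq> {1..m}" and f = "\<lambda>S. card ({1..m} - S)"])
    fix S assume S: "S \<subseteq> {1..m}" and bS: "b S"
    have p: "S \<subseteq> htc_pass m D B S" "htc_pass m D B S \<subseteq> {1..m}" using pass_props[OF S] by auto
    have "S \<subset> htc_pass m D B S" using p bS by (auto simp: b_def)
    then have "{1..m} - htc_pass m D B S \<subset> {1..m} - S" using p by blast
    then have "card ({1..m} - htc_pass m D B S) < card ({1..m} - S)" by (rule psubset_card_mono[rotated]) simp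
    then show "htc_pass m D B S \<subseteq> {1..m} \<and> card ({1..m} - htc_pass m D B S) < card ({1..m} - S)"
      using p by blast
  qed (auto simp: S0_def)
  then obtain t where t: "while_option b (htc_pass m D B) S0 = Some t" by blast
  have tV: "t \<subseteq> {1..m}"
    by (rule while_option_rule[OF _ t, where P = "\<lambda>S. S \<subseteq> {1..m}"]) (use pass_props in \<open>auto simp: S0_def\<close>)
  have "\<not> b t" using while_option_stop[OF t] .
  have "t = {1..m}"
  proof (rule ccontr)
    assume ne: "t \<noteq> {1..m}"
    then have fix_t: "htc_pass m D B t = t" using \<open>\<not> b t\<close> by (simp add: b_def)
    obtain x where x: "x \<in> {1..m} - t" using ne tV by blast
    obtain v where v: "v \<in> {1..m} - t" and vmin: "\<forall>y. (y, v) \<in> R \<inter> {1..m} \<times> {1..m} \<longrightarrow> y \<notin> {1..m} - t"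
      using minimal_elem[OF R _ x] by blast
    have vV: "v \<in> {1..m}" using v by blast
    have Cv: "htc_criterion m D B v (Ys v)" using C vV by blast
    have "Ys v \<subseteq> htc_A m D B t v"
    proof
      fix w assume w: "w \<in> Ys v"
      have wV: "w \<in> {1..m}" and wn: "w \<notin> {v} \<union> sib B v"
        using Cv w by (auto simp: htc_criterion_def)
      have "w \<in> t \<or> w \<notin> htr m D B v"
      proof (cases "w \<in> htr m D B v")
        case True
        then have "(w, v) \<in> R" using O vV w by blast
        then show ?thesis using vmin wV vV by blast
      qed simp
      then show "w \<in> htc_A m D B t v" using wV wn by (auto simp: htc_A_def)
    qed
    then have "max_flow m D B v (htc_A m D B t v) = real (card (pa D v))"
      using step_char[OF VD VB tV] Cv by blast
    then have "htc_step m D B v t = insert v t" using v by (simp add: htc_step_def)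
    moreover have "htc_step m D B v t = t"
    proof -
      have "set [1..<Suc m] \<subseteq> {1..m}" by auto
      moreover have "fold (htc_step m D B) [1..<Suc m] t = t" using fix_t unfolding htc_pass_def .
      ultimately have "\<forall>v\<in>set [1..<Suc m]. htc_step m D B v t = t" using fold_fix tV by blast
      moreover have "v \<in> set [1..<Suc m]" using vV by auto
      ultimately show ?thesis by blast
    qed
    ultimately show False using v by blast
  qed
  then show "htc_procedure m D B = Some {1..m}"
    using t unfolding htc_procedure_def b_def S0_def by simp
next
  note VD = assms(1) and VB = assms(2)
  assume h: "htc_procedure m D B = Some {1..m}"
  have "Inv m D B {1..m}"
    by (rule while_option_rule[OF _ h[unfolded htc_procedure_def], where P = "Inv m D B"])
       (use Inv_pass[OF VD VB] Inv_init in auto)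
  then obtain Ys R where R: "strict_linear_order_on {1..m} R"
    and C: "\<forall>v\<in>{1..m}. htc_criterion m D B v (Ys v) \<and> (\<forall>w \<in> Ys v \<inter> htr m D B v. (w, v) \<in> R)"
    unfolding Inv_def by blast
  show "HTC_identifiable m D B"
    unfolding HTC_identifiable_def using R C by blast
qed


end
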